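(* Let $2\le k\le n-1$ and let $G$ be a connected graph with $n$ vertices and chromatic number $k$ (or, alternatively, clique number $k$). Then $$\sigma_2(G)\ge\begin{cases}2n+2k^2-6k+2 & \text{if } 2\le k\le\lfloor\frac{n+1}{2}\rfloor,\\ (8k-3)n-2n^2-6k^2+4k-1 & \text{if } \lfloor\frac{n+1}2\rfloor<k<\lceil\frac{2n+1}{3}\rceil,\\ 2(k-1)n-\frac{3k^2}{2}+\frac{5k}{2}-1 & \text{if }\lceil\frac{2n+1}3\rceil\le k\le n-1.\end{cases}$$ Equality holds if and only if $G=K_s\vee(K_{k-s}+\overline{K}_{n-k})$, where $s=1$ in the first case, $s\in\{4k-2n-2,\,4k-2n-1\}$ in the second case, and $s=k-1$ in the third case.
   Context: All graphs are finite, simple, undirected. For a connected graph $G$ and $u\in V(G)$, $\varepsilon_G(u)=\max_v d_G(u,v)$, and $\sigma_2(G)=\sum_{uv\in E(G)}\varepsilon_G(u)\varepsilon_G(v)$. $K_r$ is the complete graph, $\overline{K}_r$ the edgeless graph on $r$ vertices; $G+H$ is the disjoint union, and $G\vee H$ (the join) is obtained from $G+H$ by adding all edges between $V(G)$ and $V(H)$. *)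

theory Defs
  imports Complex_Main
begin

type_synonym 'a graph = "'a set \<times> 'a set set"

definition verts :: "'a graph \<Rightarrow> 'a set" where "verts G = fst G"
definition edges :: "'a graph \<Rightarrow> 'a set set" where "edges G = snd G"

definition simple_graph :: "'a graph \<Rightarrow> bool" where
  "simple_graph G \<longleftrightarrow> finite (verts G) \<and>
     (\<forall>e\<in>edges G. \<exists>u v. e = {u, v} \<and> u \<noteq> v \<and> u \<in> verts G \<and> v \<in> verts G)"

definition adj :: "'a graph \<Rightarrow> 'a \<Rightarrow> 'a \<Rightarrow> bool" where
  "adj G u v \<longleftrightarrow> {u, v} \<in> edges G"

definition walk :: "'a graph \<Rightarrow> 'a list \<Rightarrow> bool" where
  "walk G xs \<longleftrightarrow> xs \<noteq> [] \<and> set xs \<subseteq> verts G \<and>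
     (\<forall>i. Suc i < length xs \<longrightarrow> adj G (xs ! i) (xs ! Suc i))"

definition connected_graph :: "'a graph \<Rightarrow> bool" where
  "connected_graph G \<longleftrightarrow> verts G \<noteq> {} \<and>
     (\<forall>u\<in>verts G. \<forall>v\<in>verts G. \<exists>xs. walk G xs \<and> hd xs = u \<and> last xs = v)"

definition gdist :: "'a graph \<Rightarrow> 'a \<Rightarrow> 'a \<Rightarrow> nat" where
  "gdist G u v = (LEAST m. \<exists>xs. walk G xs \<and> hd xs = u \<and> last xs = v \<and> length xs = Suc m)"

definition ecc :: "'a graph \<Rightarrow> 'a \<Rightarrow> nat" where
  "ecc G u = Max ((\<lambda>v. gdist G u v) ` verts G)"

definition sigma2 :: "'a graph \<Rightarrow> nat" where
  "sigma2 G = (\<Sum>e\<in>edges G. \<Prod>x\<in>e. ecc G x)"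

definition proper_coloring :: "'a graph \<Rightarrow> ('a \<Rightarrow> nat) \<Rightarrow> nat \<Rightarrow> bool" where
  "proper_coloring G c q \<longleftrightarrow> (\<forall>v\<in>verts G. c v < q) \<and>
     (\<forall>u v. adj G u v \<longrightarrow> c u \<noteq> c v)"

definition chromatic_number :: "'a graph \<Rightarrow> nat" where
  "chromatic_number G = (LEAST q. \<exists>c. proper_coloring G c q)"

definition is_clique :: "'a graph \<Rightarrow> 'a set \<Rightarrow> bool" where
  "is_clique G C \<longleftrightarrow> C \<subseteq> verts G \<and> (\<forall>u\<in>C. \<forall>v\<in>C. u \<noteq> v \<longrightarrow> adj G u v)"

definition clique_number :: "'a graph \<Rightarrow> nat" where
  "clique_number G = Max (card ` {C. is_clique G C})"

definition complete_graph :: "nat \<Rightarrow> nat graph" where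
  "complete_graph r = ({..<r}, {{u, v} | u v. u < r \<and> v < r \<and> u \<noteq> v})"

definition edgeless_graph :: "nat \<Rightarrow> nat graph" where
  "edgeless_graph r = ({..<r}, {})"

definition disj_union :: "'a graph \<Rightarrow> 'b graph \<Rightarrow> ('a + 'b) graph" where
  "disj_union G H = (Inl ` verts G \<union> Inr ` verts H,
                      (\<lambda>e. Inl ` e) ` edges G \<union> (\<lambda>e. Inr ` e) ` edges H)"

definition graph_join :: "'a graph \<Rightarrow> 'b graph \<Rightarrow> ('a + 'b) graph" where
  "graph_join G H = (verts (disj_union G H),
     edges (disj_union G H) \<union> {{Inl u, Inr v} | u v. u \<in> verts G \<and> v \<in> verts H})"

definition graph_iso :: "'a graph \<Rightarrow> 'b graph \<Rightarrow> bool" where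
  "graph_iso G H \<longleftrightarrow> (\<exists>f. bij_betw f (verts G) (verts H) \<and>
     (\<forall>u\<in>verts G. \<forall>v\<in>verts G. adj G u v \<longleftrightarrow> adj H (f u) (f v)))"

definition extremal_graph :: "nat \<Rightarrow> nat \<Rightarrow> nat \<Rightarrow> (nat + (nat + nat)) graph" where
  "extremal_graph n k s =
     graph_join (complete_graph s) (disj_union (complete_graph (k - s)) (edgeless_graph (n - k)))"

end

theory Submission
  imports Defs
begin

definition univG :: "'a graph \<Rightarrow> 'a set" where
  "univG G = {u\<in>verts G. \<forall>v\<in>verts G. v \<noteq> u \<longrightarrow> adj G u v}"
definition nbrG :: "'a graph \<Rightarrow> 'a set \<Rightarrow> 'a \<Rightarrow> 'a set" where
  "nbrG G S u = {v\<in>S. adj G u v}"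
definition DG :: "'a graph \<Rightarrow> nat" where
  "DG G = (\<Sum>u\<in>verts G - univG G. card (nbrG G (verts G - univG G) u))"

locale sgraph =
  fixes G :: "'a graph"
  assumes sg: "simple_graph G"
begin

abbreviation "V \<equiv> verts G"

lemma finV: "finite V" using sg by (simp add: simple_graph_def)

lemma adjD: "adj G u v \<Longrightarrow> u \<in> V \<and> v \<in> V \<and> u \<noteq> v"
proof -
  assume "adj G u v"
  then have "{u,v} \<in> edges G" by (simp add: adj_def)
  then obtain a b where "{u,v} = {a,b}" "a \<noteq> b" "a \<in> V" "b \<in> V"
    using sg unfolding simple_graph_def by blast
  then show ?thesis by (auto simp: doubleton_eq_iff)
qed

lemma adj_sym: "adj G u v \<longleftrightarrow> adj G v u"
  by (simp add: adj_def insert_commute)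

lemma adj_irrefl[simp]: "\<not> adj G u u" using adjD by blast

abbreviation "Uv \<equiv> univG G"
abbreviation "nbr \<equiv> nbrG G"
lemma univ_def: "Uv = {u\<in>V. \<forall>v\<in>V. v \<noteq> u \<longrightarrow> adj G u v}" by (simp add: univG_def)
lemma nbr_def: "nbr S u = {v\<in>S. adj G u v}" by (simp add: nbrG_def)

lemma gdist_le:
  assumes "walk G xs" "hd xs = u" "last xs = v"
  shows "gdist G u v \<le> length xs - 1"
proof -
  have "\<exists>ys. walk G ys \<and> hd ys = u \<and> last ys = v \<and> length ys = Suc (length xs - 1)"
    using assms by (intro exI[of _ xs]) (auto simp: walk_def)
  then show ?thesis unfolding gdist_def by (rule Least_le)
qed

lemma gdist_0: "u \<in> V \<Longrightarrow> gdist G u u = 0"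
  using gdist_le[of "[u]" u u] by (simp add: walk_def)

lemma gdist_1: "adj G u v \<Longrightarrow> gdist G u v \<le> 1"
  using gdist_le[of "[u,v]" u v] adjD[of u v] by (simp add: walk_def less_Suc_eq)

lemma gdist_2: "adj G u x \<Longrightarrow> adj G x v \<Longrightarrow> gdist G u v \<le> 2"
  using gdist_le[of "[u,x,v]" u v] adjD[of u x] adjD[of x v]
  by (simp add: walk_def less_Suc_eq nth_Cons split: nat.splits)

lemma gdist_ge2:
  assumes conn: "connected_graph G" and uv: "u \<in> V" "v \<in> V" "u \<noteq> v" "\<not> adj G u v"
  shows "2 \<le> gdist G u v"
proof -
  obtain xs where xs: "walk G xs" "hd xs = u" "last xs = v"
    using conn uv unfolding connected_graph_def by blast
  have ex: "\<exists>m ys. walk G ys \<and> hd ys = u \<and> last ys = v \<and> length ys = Suc m"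
  proof (intro exI conjI)
    show "walk G xs" "hd xs = u" "last xs = v" by fact+
    show "length xs = Suc (length xs - 1)" using xs(1) by (simp add: walk_def)
  qed
  have "\<exists>ys. walk G ys \<and> hd ys = u \<and> last ys = v \<and> length ys = Suc (gdist G u v)"
    unfolding gdist_def by (rule LeastI_ex[OF ex])
  then obtain ys where ys: "walk G ys" "hd ys = u" "last ys = v" "length ys = Suc (gdist G u v)"
    by blast
  show ?thesis
  proof (rule ccontr)
    assume "\<not> 2 \<le> gdist G u v"
    then have "gdist G u v = 0 \<or> gdist G u v = 1" by auto
    then show False
    proof
      assume "gdist G u v = 0"
      then have "length ys = 1" using ys(4) by simp
      then have "hd ys = last ys" by (cases ys) auto
      then show False using ys uv by simp
    next
      assume "gdist G u v = 1"
      then have l: "length ys = 2" using ys(4) by simp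
      then have ne: "ys \<noteq> []" by auto
      have "hd ys = ys ! 0" using ne by (simp add: hd_conv_nth)
      moreover have "last ys = ys ! 1" using ne l by (simp add: last_conv_nth)
      moreover have "adj G (ys ! 0) (ys ! Suc 0)" using ys(1) l by (simp add: walk_def)
      ultimately show False using ys uv by simp
    qed
  qed
qed


lemma finE: "finite (edges G)"
proof -
  have "edges G \<subseteq> Pow V" using sg unfolding simple_graph_def by auto
  then show ?thesis using finV finite_subset by blast
qed

lemma nbr_sub: "nbr S u \<subseteq> S" by (auto simp: nbr_def)

lemma sum_edges:
  fixes h :: "'a \<Rightarrow> nat"
  shows "2 * (\<Sum>e\<in>edges G. \<Prod>x\<in>e. h x) = (\<Sum>u\<in>V. \<Sum>v\<in>nbr V u. h u * h v)"
proof -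
  define P where "P = (SIGMA u:V. nbr V u)"
  have finP: "finite P" unfolding P_def using finV by (auto intro: finite_subset[OF nbr_sub])
  have "(\<Sum>u\<in>V. \<Sum>v\<in>nbr V u. h u * h v) = (\<Sum>p\<in>P. h (fst p) * h (snd p))"
    unfolding P_def using finV
    by (subst sum.Sigma) (auto intro: finite_subset[OF nbr_sub] simp: case_prod_beta)
  also have "\<dots> = (\<Sum>e\<in>edges G. \<Sum>p\<in>{p\<in>P. {fst p, snd p} = e}. h (fst p) * h (snd p))"
  proof (rule sum.group[symmetric, OF finP finE])
    show "(\<lambda>p. {fst p, snd p}) ` P \<subseteq> edges G"
      by (auto simp: P_def nbr_def adj_def)
  qed
  also have "\<dots> = (\<Sum>e\<in>edges G. 2 * (\<Prod>x\<in>e. h x))"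
  proof (rule sum.cong[OF refl])
    fix e assume e: "e \<in> edges G"
    then obtain a b where ab: "e = {a,b}" "a \<noteq> b" "a \<in> V" "b \<in> V"
      using sg unfolding simple_graph_def by blast
    have adjab: "adj G a b" "adj G b a" using e ab by (auto simp: adj_def insert_commute)
    have "{p\<in>P. {fst p, snd p} = e} = {(a,b),(b,a)}"
      using ab adjab by (auto simp: P_def nbr_def doubleton_eq_iff)
    then show "(\<Sum>p\<in>{p\<in>P. {fst p, snd p} = e}. h (fst p) * h (snd p)) = 2 * (\<Prod>x\<in>e. h x)"
      using ab by (simp add: mult.commute)
  qed
  also have "\<dots> = 2 * (\<Sum>e\<in>edges G. \<Prod>x\<in>e. h x)" by (simp add: sum_distrib_left)
  finally show ?thesis by simp
qed

lemma gdist_walk: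
  assumes conn: "connected_graph G" and uv: "u \<in> V" "v \<in> V"
  shows "\<exists>ys. walk G ys \<and> hd ys = u \<and> last ys = v \<and> length ys = Suc (gdist G u v)"
proof -
  obtain xs where xs: "walk G xs" "hd xs = u" "last xs = v"
    using conn uv unfolding connected_graph_def by blast
  have ex: "\<exists>m ys. walk G ys \<and> hd ys = u \<and> last ys = v \<and> length ys = Suc m"
  proof (intro exI conjI)
    show "walk G xs" "hd xs = u" "last xs = v" by fact+
    show "length xs = Suc (length xs - 1)" using xs(1) by (simp add: walk_def)
  qed
  show ?thesis unfolding gdist_def by (rule LeastI_ex[OF ex])
qed

lemma gdist_ge1:
  assumes conn: "connected_graph G" and uv: "u \<in> V" "v \<in> V" "u \<noteq> v"
  shows "1 \<le> gdist G u v"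
proof (rule ccontr)
  obtain ys where ys: "walk G ys" "hd ys = u" "last ys = v" "length ys = Suc (gdist G u v)"
    using gdist_walk[OF conn uv(1,2)] by blast
  assume "\<not> 1 \<le> gdist G u v"
  then have "length ys = 1" using ys(4) by simp
  then have "hd ys = last ys" by (cases ys) auto
  then show False using ys uv by simp
qed

lemma ecc_eq_Max: "ecc G u = Max ((\<lambda>v. gdist G u v) ` V)" by (simp add: ecc_def)

lemma ecc_le:
  assumes "V \<noteq> {}" "\<And>v. v \<in> V \<Longrightarrow> gdist G u v \<le> m"
  shows "ecc G u \<le> m"
  unfolding ecc_def using assms finV by (subst Max_le_iff) auto

lemma ecc_ge:
  assumes "v \<in> V" "m \<le> gdist G u v"
  shows "m \<le> ecc G u"
  unfolding ecc_def using assms finV by (subst Max_ge_iff) auto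

end

locale cgraph = sgraph +
  assumes conn: "connected_graph G" and two: "2 \<le> card V"
begin

lemma Vne: "V \<noteq> {}" using conn by (simp add: connected_graph_def)

lemma other: assumes "u \<in> V" shows "\<exists>v\<in>V. v \<noteq> u"
proof -
  have "\<not> V \<subseteq> {u}"
  proof
    assume "V \<subseteq> {u}"
    then have "card V \<le> card {u}" by (intro card_mono) auto
    then show False using two by simp
  qed
  then show ?thesis by blast
qed

lemma ecc_univ: "u \<in> Uv \<Longrightarrow> ecc G u = 1"
proof -
  assume u: "u \<in> Uv"
  then have uV: "u \<in> V" by (simp add: univ_def)
  have "ecc G u \<le> 1"
  proof (rule ecc_le[OF Vne])
    fix v assume v: "v \<in> V"
    show "gdist G u v \<le> 1"
    proof (cases "v = u")
      case True then show ?thesis using gdist_0 uV by simp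
    next
      case False then show ?thesis using u v gdist_1 by (auto simp: univ_def)
    qed
  qed
  moreover obtain v where "v \<in> V" "v \<noteq> u" using other uV by blast
  then have "1 \<le> ecc G u" using gdist_ge1[OF conn uV] ecc_ge by metis
  ultimately show ?thesis by simp
qed

lemma ecc_nonuniv_ge: "u \<in> V \<Longrightarrow> u \<notin> Uv \<Longrightarrow> 2 \<le> ecc G u"
proof -
  assume "u \<in> V" "u \<notin> Uv"
  then obtain v where "v \<in> V" "v \<noteq> u" "\<not> adj G u v" by (auto simp: univ_def)
  then show ?thesis using gdist_ge2[OF conn \<open>u \<in> V\<close>] ecc_ge by metis
qed

lemma ecc_nonuniv: "u \<in> V \<Longrightarrow> u \<notin> Uv \<Longrightarrow> Uv \<noteq> {} \<Longrightarrow> ecc G u = 2"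
proof -
  assume u: "u \<in> V" "u \<notin> Uv" "Uv \<noteq> {}"
  then obtain x where x: "x \<in> Uv" by auto
  then have xV: "x \<in> V" by (simp add: univ_def)
  have ux: "u \<noteq> x" using u x by auto
  have "ecc G u \<le> 2"
  proof (rule ecc_le[OF Vne])
    fix v assume v: "v \<in> V"
    show "gdist G u v \<le> 2"
    proof (cases "v = x")
      case True
      have "adj G u x" using x u ux by (auto simp: univ_def adj_sym)
      then show ?thesis using gdist_1 True by fastforce
    next
      case False
      have "adj G u x" using x u ux by (auto simp: univ_def adj_sym)
      moreover have "adj G x v" using x v False by (auto simp: univ_def)
      ultimately show ?thesis by (rule gdist_2)
    qed
  qed
  then show ?thesis using ecc_nonuniv_ge[OF u(1,2)] by linarith
qed


abbreviation "W \<equiv> V - Uv"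
abbreviation "D \<equiv> DG G"
lemma D_def: "D = (\<Sum>u\<in>W. card (nbr W u))" by (simp add: DG_def)

lemma univ_sub: "Uv \<subseteq> V" by (auto simp: univ_def)
lemma fin_univ: "finite Uv" using finV univ_sub finite_subset by blast
lemma fin_W: "finite W" using finV by simp
lemma card_W: "card W = card V - card Uv" using univ_sub fin_univ by (simp add: card_Diff_subset)

lemma univ_adj: "u \<in> Uv \<Longrightarrow> v \<in> V \<Longrightarrow> v \<noteq> u \<Longrightarrow> adj G u v \<and> adj G v u"
  by (auto simp: univ_def adj_sym)

lemma sigma2_sum: "2 * sigma2 G = (\<Sum>u\<in>V. \<Sum>v\<in>nbr V u. ecc G u * ecc G v)"
  unfolding sigma2_def by (rule sum_edges)

lemma nbr_univ: assumes u: "u \<in> Uv" shows "nbr V u = (Uv - {u}) \<union> W"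
proof
  show "nbr V u \<subseteq> Uv - {u} \<union> W" by (auto simp: nbr_def)
  show "Uv - {u} \<union> W \<subseteq> nbr V u"
  proof
    fix v assume v: "v \<in> Uv - {u} \<union> W"
    then have "v \<in> V" "v \<noteq> u" using univ_sub u by auto
    then show "v \<in> nbr V u" using univ_adj[OF u] by (simp add: nbr_def)
  qed
qed

lemma nbr_W: assumes u: "u \<in> W" shows "nbr V u = Uv \<union> nbr W u"
proof
  show "nbr V u \<subseteq> Uv \<union> nbr W u" by (auto simp: nbr_def)
  show "Uv \<union> nbr W u \<subseteq> nbr V u"
  proof
    fix v assume v: "v \<in> Uv \<union> nbr W u"
    show "v \<in> nbr V u"
    proof (cases "v \<in> Uv")
      case True
      then have "v \<in> V" "v \<noteq> u" using univ_sub u by auto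
      then show ?thesis using univ_adj[OF True, of u] u by (simp add: nbr_def)
    next
      case False then show ?thesis using v by (auto simp: nbr_def)
    qed
  qed
qed

lemma sigma_formula:
  assumes ne: "Uv \<noteq> {}"
  shows "2 * sigma2 G = card Uv * (card Uv - 1) + 4 * card Uv * (card V - card Uv) + 4 * D"
proof -
  let ?t = "card Uv" and ?n = "card V"
  let ?f = "\<lambda>u. \<Sum>v\<in>nbr V u. ecc G u * ecc G v"
  have split: "(\<Sum>u\<in>V. ?f u) = (\<Sum>u\<in>Uv. ?f u) + (\<Sum>u\<in>W. ?f u)"
    using sum.subset_diff[OF univ_sub finV, of ?f] by simp
  have A: "?f u = (?t - 1) + 2 * (?n - ?t)" if u: "u \<in> Uv" for u
  proof -
    have uV: "u \<in> V" using u univ_sub by auto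
    have nb: "nbr V u = (Uv - {u}) \<union> W" by (rule nbr_univ[OF u])
    have "?f u = (\<Sum>v\<in>Uv - {u}. ecc G u * ecc G v) + (\<Sum>v\<in>W. ecc G u * ecc G v)"
      unfolding nb by (rule sum.union_disjoint) (use fin_univ fin_W in auto)
    also have "(\<Sum>v\<in>Uv - {u}. ecc G u * ecc G v) = (\<Sum>v\<in>Uv - {u}. 1)"
      by (rule sum.cong) (auto simp: ecc_univ u)
    also have "(\<Sum>v\<in>W. ecc G u * ecc G v) = (\<Sum>v\<in>W. 2)"
      by (rule sum.cong) (auto simp: ecc_univ u ecc_nonuniv ne)
    finally show ?thesis using u fin_univ card_W by simp
  qed
  have B: "?f u = 2 * ?t + 4 * card (nbr W u)" if u: "u \<in> W" for u
  proof -
    have nb: "nbr V u = Uv \<union> nbr W u" by (rule nbr_W[OF u])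
    have "?f u = (\<Sum>v\<in>Uv. ecc G u * ecc G v) + (\<Sum>v\<in>nbr W u. ecc G u * ecc G v)"
      unfolding nb by (rule sum.union_disjoint) (use fin_univ fin_W in \<open>auto simp: nbr_def\<close>)
    also have "(\<Sum>v\<in>Uv. ecc G u * ecc G v) = (\<Sum>v\<in>Uv. 2)"
      by (rule sum.cong) (use u in \<open>auto simp: ecc_univ ecc_nonuniv ne\<close>)
    also have "(\<Sum>v\<in>nbr W u. ecc G u * ecc G v) = (\<Sum>v\<in>nbr W u. 4)"
      by (rule sum.cong) (use u in \<open>auto simp: ecc_univ ecc_nonuniv ne nbr_def\<close>)
    finally show ?thesis by simp
  qed
  have "(\<Sum>u\<in>Uv. ?f u) = ?t * ((?t - 1) + 2 * (?n - ?t))" using A by simp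
  moreover have "(\<Sum>u\<in>W. ?f u) = (?n - ?t) * (2 * ?t) + 4 * D"
    using B card_W by (simp add: D_def sum.distrib sum_distrib_left)
  ultimately have eq: "2 * sigma2 G = ?t * ((?t - 1) + 2 * (?n - ?t)) + ((?n - ?t) * (2 * ?t) + 4 * D)"
    using sigma2_sum split by simp
  have "?t \<le> ?n" by (rule card_mono[OF finV univ_sub])
  then obtain a where na: "?n = ?t + a" using le_iff_add by blast
  have "?t \<noteq> 0" using ne fin_univ by simp
  then obtain b where tb: "?t = Suc b" using not0_implies_Suc by blast
  show ?thesis using eq unfolding na tb by (simp add: algebra_simps)
qed

lemma sigma_lower0:
  assumes e: "Uv = {}"
  shows "4 * (\<Sum>u\<in>V. card (nbr V u)) \<le> 2 * sigma2 G"
proof -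
  have "4 * (\<Sum>u\<in>V. card (nbr V u)) = (\<Sum>u\<in>V. \<Sum>v\<in>nbr V u. 4)"
    by (simp add: sum_distrib_left mult.commute)
  also have "\<dots> \<le> (\<Sum>u\<in>V. \<Sum>v\<in>nbr V u. ecc G u * ecc G v)"
  proof (intro sum_mono)
    fix u v assume "u \<in> V" "v \<in> nbr V u"
    then have "2 \<le> ecc G u" "2 \<le> ecc G v" using ecc_nonuniv_ge e by (auto simp: nbr_def)
    then have "2 * 2 \<le> ecc G u * ecc G v" by (intro mult_mono) auto
    then show "4 \<le> ecc G u * ecc G v" by simp
  qed
  finally show ?thesis using sigma2_sum by simp
qed


end

context sgraph
begin

definition colorable :: "'a set \<Rightarrow> nat \<Rightarrow> bool" where
  "colorable S q \<longleftrightarrow> (\<exists>c. (\<forall>v\<in>S. c v < q) \<and> (\<forall>u\<in>S. \<forall>v\<in>S. adj G u v \<longrightarrow> c u \<noteq> c v))"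

lemma nbr_card_le: "finite S \<Longrightarrow> u \<in> S \<Longrightarrow> card (nbr S u) \<le> card S - 1"
proof -
  assume "finite S" "u \<in> S"
  have "nbr S u \<subseteq> S - {u}" by (auto simp: nbr_def)
  then have "card (nbr S u) \<le> card (S - {u})" using \<open>finite S\<close> by (intro card_mono) auto
  then show ?thesis using \<open>u \<in> S\<close> \<open>finite S\<close> by simp
qed

lemma critical:
  assumes fin: "finite W0" and nc: "\<not> colorable W0 r"
  shows "\<exists>S\<subseteq>W0. S \<noteq> {} \<and> (\<forall>u\<in>S. r \<le> card (nbr S u))"
proof -
  let ?P = "\<lambda>m. \<exists>S. S \<subseteq> W0 \<and> \<not> colorable S r \<and> card S = m"
  have ex: "?P (card W0)" using nc by blast
  have "?P (LEAST m. ?P m)" by (rule LeastI_ex) (use ex in blast)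
  then obtain S where S: "S \<subseteq> W0" "\<not> colorable S r" "card S = (LEAST m. ?P m)"
    by blast
  have finS: "finite S" using S(1) fin finite_subset by blast
  have min: "card S \<le> card S'" if "S' \<subseteq> W0" "\<not> colorable S' r" for S'
    unfolding S(3) by (rule Least_le) (use that in blast)
  have "S \<noteq> {}"
  proof
    assume "S = {}"
    then have "colorable S r" by (simp add: colorable_def)
    then show False using S(2) by simp
  qed
  moreover have "r \<le> card (nbr S u)" if u: "u \<in> S" for u
  proof (rule ccontr)
    assume lt: "\<not> r \<le> card (nbr S u)"
    have "card S > 0" using u finS card_gt_0_iff by blast
    then have "card (S - {u}) < card S" using u finS by simp
    then have "colorable (S - {u}) r" using min[of "S - {u}"] S(1) by auto
    then obtain c where c: "\<forall>v\<in>S - {u}. c v < r" "\<forall>x\<in>S - {u}. \<forall>y\<in>S - {u}. adj G x y \<longrightarrow> c x \<noteq> c y"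
      unfolding colorable_def by blast
    have fn: "finite (nbr S u)" using finite_subset[OF nbr_sub finS] .
    have "card (c ` nbr S u) < card {..<r}"
      using lt card_image_le[OF fn, of c] by simp
    then have "\<not> {..<r} \<subseteq> c ` nbr S u"
      using card_mono[of "c ` nbr S u" "{..<r}"] finS by (auto intro: finite_subset[OF nbr_sub])
    then obtain j where j: "j < r" "j \<notin> c ` nbr S u" by auto
    define c' where "c' = c(u := j)"
    have "colorable S r"
      unfolding colorable_def
    proof (intro exI[of _ c'] conjI ballI impI)
      fix v assume "v \<in> S" then show "c' v < r" using c j by (auto simp: c'_def)
    next
      fix x y assume xy: "x \<in> S" "y \<in> S" "adj G x y"
      show "c' x \<noteq> c' y"
      proof (cases "x = u")
        case True
        then have "y \<noteq> u" using xy adjD by blast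
        then have "y \<in> nbr S u" using xy True by (simp add: nbr_def)
        then show ?thesis using True \<open>y \<noteq> u\<close> j by (auto simp: c'_def)
      next
        case False
        show ?thesis
        proof (cases "y = u")
          case True
          then have "x \<in> nbr S u" using xy False by (simp add: nbr_def adj_sym)
          then show ?thesis using True False j by (auto simp: c'_def)
        next
          case False2: False
          then show ?thesis using c(2) xy False by (auto simp: c'_def)
        qed
      qed
    qed
    then show False using S(2) by simp
  qed
  ultimately show ?thesis using S(1) by blast
qed

lemma clique_not_colorable:
  assumes C: "is_clique G C" "finite C" and col: "colorable V q"
  shows "card C \<le> q"
proof -
  obtain c where c: "\<forall>v\<in>V. c v < q" "\<forall>u\<in>V. \<forall>v\<in>V. adj G u v \<longrightarrow> c u \<noteq> c v"
    using col unfolding colorable_def by blast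
  have sub: "C \<subseteq> V" using C by (simp add: is_clique_def)
  have "inj_on c C"
  proof (rule inj_onI)
    fix x y assume "x \<in> C" "y \<in> C" "c x = c y"
    then show "x = y" using C c(2) sub unfolding is_clique_def by blast
  qed
  then have "card C = card (c ` C)" by (simp add: card_image)
  also have "\<dots> \<le> card {..<q}" using c(1) sub by (intro card_mono) auto
  finally show ?thesis by simp
qed

lemma chrom_facts:
  assumes "chromatic_number G = k" "1 \<le> k"
  shows "colorable V k" "\<not> colorable V (k - 1)"
proof -
  obtain h where h: "bij_betw h V {0..<card V}" using ex_bij_betw_finite_nat[OF finV] by blast
  have "proper_coloring G h (card V)"
    unfolding proper_coloring_def
  proof (intro conjI allI impI ballI)
    fix v assume "v \<in> V" then show "h v < card V" using h by (auto simp: bij_betw_def)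
  next
    fix u v assume "adj G u v"
    then have "u \<in> V" "v \<in> V" "u \<noteq> v" using adjD by auto
    then show "h u \<noteq> h v" using h by (auto simp: bij_betw_def inj_on_def)
  qed
  then have ex: "\<exists>q c. proper_coloring G c q" by blast
  have "\<exists>c. proper_coloring G c k"
    using LeastI_ex[OF ex] assms(1) by (simp add: chromatic_number_def)
  then show "colorable V k" by (auto simp: proper_coloring_def colorable_def)
  show "\<not> colorable V (k - 1)"
  proof
    assume "colorable V (k - 1)"
    then obtain c where c: "\<forall>v\<in>V. c v < k - 1" "\<forall>u\<in>V. \<forall>v\<in>V. adj G u v \<longrightarrow> c u \<noteq> c v"
      unfolding colorable_def by blast
    have "proper_coloring G c (k - 1)"
      unfolding proper_coloring_def using c adjD by blast
    then have "chromatic_number G \<le> k - 1"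
      unfolding chromatic_number_def using Least_le[of "\<lambda>q. \<exists>c. proper_coloring G c q" "k - 1"] by blast
    then show False using assms by simp
  qed
qed

lemma clique_facts:
  assumes "clique_number G = k"
  shows "\<exists>C. is_clique G C \<and> card C = k" "\<And>C. is_clique G C \<Longrightarrow> card C \<le> k"
proof -
  have fin: "finite {C. is_clique G C}"
    by (rule finite_subset[of _ "Pow V"]) (auto simp: is_clique_def finV)
  have ne: "{C. is_clique G C} \<noteq> {}" by (auto simp: is_clique_def intro: exI[of _ "{}"])
  have "k \<in> card ` {C. is_clique G C}"
    using assms Max_in[of "card ` {C. is_clique G C}"] fin ne by (simp add: clique_number_def)
  then show "\<exists>C. is_clique G C \<and> card C = k" by auto
  fix C assume "is_clique G C"
  then show "card C \<le> k" using assms fin by (auto simp: clique_number_def intro: Max_ge)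
qed

end

context cgraph
begin

lemma univ_clique: "is_clique G Uv"
  using univ_sub univ_adj by (auto simp: is_clique_def)

lemma extend_col:
  assumes "colorable W q" shows "colorable V (q + card Uv)"
proof -
  obtain c where c: "\<forall>v\<in>W. c v < q" "\<forall>u\<in>W. \<forall>v\<in>W. adj G u v \<longrightarrow> c u \<noteq> c v"
    using assms unfolding colorable_def by blast
  obtain h where h: "bij_betw h Uv {0..<card Uv}" using ex_bij_betw_finite_nat[OF fin_univ] by blast
  define c' where "c' v = (if v \<in> Uv then q + h v else c v)" for v
  show ?thesis unfolding colorable_def
  proof (intro exI[of _ c'] conjI ballI impI)
    fix v assume v: "v \<in> V"
    show "c' v < q + card Uv"
    proof (cases "v \<in> Uv")
      case True then show ?thesis using h by (auto simp: c'_def bij_betw_def)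
    next
      case False then have "c v < q" using c v by blast
      then show ?thesis using False by (simp add: c'_def)
    qed
  next
    fix x y assume xy: "x \<in> V" "y \<in> V" "adj G x y"
    then have "x \<noteq> y" using adjD by blast
    have cb: "\<forall>v\<in>V. v \<notin> Uv \<longrightarrow> c v < q" using c by blast
    show "c' x \<noteq> c' y" using xy c h cb \<open>x \<noteq> y\<close>
      by (auto simp: c'_def bij_betw_def inj_on_def)
  qed
qed


lemma core:
  assumes kk: "chromatic_number G = k \<or> clique_number G = k" and k2: "2 \<le> k" and kn: "k < card V"
  shows "card Uv \<le> k - 1 \<and> (\<exists>S\<subseteq>W. k - card Uv \<le> card S \<and> (\<forall>u\<in>S. k - card Uv - 1 \<le> card (nbr S u)))"
proof -
  have cl: "card C \<le> k" if C: "is_clique G C" for C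
  proof -
    have finC: "finite C" using C finV finite_subset by (auto simp: is_clique_def)
    show ?thesis
    proof (cases "chromatic_number G = k")
      case True
      then have "colorable V k" using chrom_facts(1) k2 by simp
      then show ?thesis using clique_not_colorable C finC by blast
    next
      case False
      then have "clique_number G = k" using kk by simp
      then show ?thesis using clique_facts(2) C by blast
    qed
  qed
  have tle: "card Uv \<le> k - 1"
  proof (rule ccontr)
    assume "\<not> card Uv \<le> k - 1"
    then have kt: "k \<le> card Uv" by simp
    show False
    proof (cases "W = {}")
      case True
      then have "Uv = V" using univ_sub by auto
      then show False using cl[OF univ_clique] kn by simp
    next
      case False
      then obtain w where w: "w \<in> W" by auto
      have "is_clique G (insert w Uv)"
        using univ_clique w univ_adj by (auto simp: is_clique_def)
      then have "card (insert w Uv) \<le> k" by (rule cl)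
      then show False using w fin_univ kt by simp
    qed
  qed
  have "\<exists>S\<subseteq>W. k - card Uv \<le> card S \<and> (\<forall>u\<in>S. k - card Uv - 1 \<le> card (nbr S u))"
  proof (cases "chromatic_number G = k")
    case True
    have k1: "1 \<le> k" using k2 by simp
    have ncV: "\<not> colorable V (k - 1)" by (rule chrom_facts(2)[OF True k1])
    have ncW: "\<not> colorable W (k - 1 - card Uv)"
    proof
      assume "colorable W (k - 1 - card Uv)"
      then have "colorable V (k - 1 - card Uv + card Uv)" by (rule extend_col)
      moreover have "k - 1 - card Uv + card Uv = k - 1" using tle by simp
      ultimately show False using ncV by simp
    qed
    then obtain S where S: "S \<subseteq> W" "S \<noteq> {}" "\<forall>u\<in>S. k - 1 - card Uv \<le> card (nbr S u)"
      using critical[OF fin_W ncW] by blast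
    obtain u where u: "u \<in> S" using S(2) by auto
    have finS: "finite S" using S(1) fin_W finite_subset by blast
    have "k - 1 - card Uv \<le> card S - 1" using S(3) u nbr_card_le[OF finS u] by force
    moreover have "card S > 0" using u finS card_gt_0_iff by blast
    ultimately have "k - card Uv \<le> card S" using tle by linarith
    then show ?thesis using S by (intro exI[of _ S]) auto
  next
    case False
    then have "clique_number G = k" using kk by simp
    then obtain C where C: "is_clique G C" "card C = k" using clique_facts(1) by blast
    have CV: "C \<subseteq> V" using C by (simp add: is_clique_def)
    let ?S = "C - Uv"
    have "k - card Uv \<le> card ?S" using diff_card_le_card_Diff[OF fin_univ, of C] C(2) by simp
    moreover have "k - card Uv - 1 \<le> card (nbr ?S u)" if u: "u \<in> ?S" for u
    proof -
      have finS: "finite ?S" using CV finV finite_subset by blast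
      have "nbr ?S u = ?S - {u}" using C(1) u by (auto simp: nbr_def is_clique_def)
      then have "card (nbr ?S u) = card ?S - 1" using u finS by simp
      then show ?thesis using \<open>k - card Uv \<le> card ?S\<close> by simp
    qed
    ultimately show ?thesis using CV by (intro exI[of _ ?S]) auto
  qed
  then show ?thesis using tle by blast
qed


end

context sgraph
begin

lemma nbr_mono: "S \<subseteq> T \<Longrightarrow> nbr S u \<subseteq> nbr T u" by (auto simp: nbr_def)

lemma degsum_mono:
  assumes fin: "finite W0" and sub: "S \<subseteq> W0"
  shows "(\<Sum>u\<in>S. card (nbr S u)) \<le> (\<Sum>u\<in>W0. card (nbr W0 u))"
proof -
  have "(\<Sum>u\<in>S. card (nbr S u)) \<le> (\<Sum>u\<in>S. card (nbr W0 u))"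
    by (rule sum_mono, rule card_mono) (use fin finite_subset[OF nbr_sub] nbr_mono[OF sub] in auto)
  also have "\<dots> \<le> (\<Sum>u\<in>W0. card (nbr W0 u))" by (rule sum_mono2[OF fin sub]) auto
  finally show ?thesis .
qed

lemma degsum_lower:
  assumes fin: "finite W0" and sub: "S \<subseteq> W0" and cS: "r + 1 \<le> card S"
    and deg: "\<forall>u\<in>S. r \<le> card (nbr S u)"
  shows "(r + 1) * r \<le> (\<Sum>u\<in>W0. card (nbr W0 u))"
proof -
  have "(r + 1) * r \<le> card S * r" using cS by (intro mult_right_mono) auto
  also have "\<dots> = (\<Sum>u\<in>S. r)" by simp
  also have "\<dots> \<le> (\<Sum>u\<in>S. card (nbr S u))" by (rule sum_mono) (use deg in auto)
  also have "\<dots> \<le> (\<Sum>u\<in>W0. card (nbr W0 u))" by (rule degsum_mono[OF fin sub])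
  finally show ?thesis .
qed

lemma degsum_eq:
  assumes fin: "finite W0" and ne: "W0 \<noteq> {}" and sub: "S \<subseteq> W0" and cS: "r + 1 \<le> card S"
    and deg: "\<forall>u\<in>S. r \<le> card (nbr S u)"
    and eq: "(\<Sum>u\<in>W0. card (nbr W0 u)) = (r + 1) * r"
  shows "\<exists>S'\<subseteq>W0. card S' = r + 1 \<and> (\<forall>u\<in>S'. \<forall>v\<in>S'. u \<noteq> v \<longrightarrow> adj G u v)
           \<and> (\<forall>u\<in>W0. \<forall>v\<in>W0. adj G u v \<longrightarrow> u \<in> S' \<and> v \<in> S')"
proof (cases "r = 0")
  case True
  then have "\<forall>u\<in>W0. card (nbr W0 u) = 0" using eq fin by simp
  then have none: "\<forall>u\<in>W0. nbr W0 u = {}" using fin finite_subset[OF nbr_sub] by auto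
  obtain w where w: "w \<in> W0" using ne by auto
  show ?thesis
  proof (intro exI[of _ "{w}"] conjI)
    show "{w} \<subseteq> W0" using w by simp
    show "card {w} = r + 1" using True by simp
    show "\<forall>u\<in>{w}. \<forall>v\<in>{w}. u \<noteq> v \<longrightarrow> adj G u v" by simp
    show "\<forall>u\<in>W0. \<forall>v\<in>W0. adj G u v \<longrightarrow> u \<in> {w} \<and> v \<in> {w}"
      using none by (auto simp: nbr_def)
  qed
next
  case False
  have finS: "finite S" using fin sub finite_subset by blast
  have fnb: "finite (nbr T u)" if "T \<subseteq> W0" for T u using that fin finite_subset[OF nbr_sub] finite_subset by blast
  let ?DS = "\<Sum>u\<in>S. card (nbr S u)"
  let ?DM = "\<Sum>u\<in>S. card (nbr W0 u)"
  let ?DW = "\<Sum>u\<in>W0. card (nbr W0 u)"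
  have m1: "?DS \<le> ?DM"
    by (rule sum_mono, rule card_mono) (use fnb nbr_mono[OF sub] in auto)
  have split: "?DW = ?DM + (\<Sum>u\<in>W0 - S. card (nbr W0 u))"
    using sum.subset_diff[OF sub fin, of "\<lambda>u. card (nbr W0 u)"] by simp
  have l1: "card S * r \<le> ?DS"
  proof -
    have "card S * r = (\<Sum>u\<in>S. r)" by simp
    also have "\<dots> \<le> ?DS" by (rule sum_mono) (use deg in auto)
    finally show ?thesis .
  qed
  have "card S * r \<le> (r + 1) * r" using l1 m1 split eq by linarith
  then have "card S \<le> r + 1" by (subst (asm) mult_le_cancel2) (use False in simp)
  then have cS': "card S = r + 1" using cS by simp
  have DSeq: "?DS = card S * r" and DMeq: "?DM = ?DS" and rest: "(\<Sum>u\<in>W0 - S. card (nbr W0 u)) = 0"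
    using l1 m1 split eq cS' by (simp_all add: algebra_simps)
  have degS: "card (nbr S u) = r" if u: "u \<in> S" for u
  proof (rule ccontr)
    assume "card (nbr S u) \<noteq> r"
    then have "r < card (nbr S u)" using deg u by force
    then have "(\<Sum>u\<in>S. r) < ?DS"
      using sum_strict_mono_ex1[OF finS, of "\<lambda>_. r" "\<lambda>u. card (nbr S u)"] deg u by blast
    then show False using DSeq by simp
  qed
  have clique: "\<forall>u\<in>S. \<forall>v\<in>S. u \<noteq> v \<longrightarrow> adj G u v"
  proof (intro ballI impI)
    fix u v assume uv: "u \<in> S" "v \<in> S" "u \<noteq> v"
    have "nbr S u \<subseteq> S - {u}" by (auto simp: nbr_def)
    moreover have "card (nbr S u) = card (S - {u})" using degS[OF uv(1)] cS' uv(1) finS by simp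
    ultimately have "nbr S u = S - {u}" using card_subset_eq[of "S - {u}"] finS by blast
    then show "adj G u v" using uv by (auto simp: nbr_def)
  qed
  have nbS: "nbr W0 u = nbr S u" if u: "u \<in> S" for u
  proof (rule ccontr)
    assume ne': "nbr W0 u \<noteq> nbr S u"
    have "nbr S u \<subseteq> nbr W0 u" by (rule nbr_mono[OF sub])
    then have "nbr S u \<subset> nbr W0 u" using ne' by auto
    then have lt: "card (nbr S u) < card (nbr W0 u)"
      by (rule psubset_card_mono[OF fnb[OF order_refl]])
    have all: "\<forall>x\<in>S. card (nbr S x) \<le> card (nbr W0 x)"
      by (intro ballI card_mono[OF fnb[OF order_refl] nbr_mono[OF sub]])
    have "?DS < ?DM"
      by (rule sum_strict_mono_ex1[OF finS all]) (use u lt in blast)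
    then show False using DMeq by simp
  qed
  have none: "nbr W0 u = {}" if u: "u \<in> W0 - S" for u
  proof -
    have "finite (W0 - S)" using fin by simp
    then have "card (nbr W0 u) = 0" using rest u by simp
    then show ?thesis using fnb[OF order_refl] by simp
  qed
  have edges_in: "u \<in> S \<and> v \<in> S" if uv: "u \<in> W0" "v \<in> W0" "adj G u v" for u v
  proof -
    have v: "v \<in> nbr W0 u" using uv by (simp add: nbr_def)
    have uS: "u \<in> S" using none[of u] uv v by blast
    then have "v \<in> S" using nbS[OF uS] v nbr_sub by blast
    then show "u \<in> S \<and> v \<in> S" using uS by simp
  qed
  show ?thesis using sub cS' clique edges_in by blast
qed

end


abbreviation "VR k s n \<equiv> Inl ` {..<k-s} \<union> Inr ` {..<n-k} :: (nat + nat) set"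

lemma verts_ext: "verts (extremal_graph n k s) = Inl ` {..<s} \<union> Inr ` VR k s n"
  by (simp add: extremal_graph_def graph_join_def disj_union_def verts_def complete_graph_def edgeless_graph_def)

lemma edges_ext: "edges (extremal_graph n k s) =
   (\<lambda>e. Inl ` e) ` {{u, v} | u v. u < s \<and> v < s \<and> u \<noteq> v}
   \<union> (\<lambda>e. Inr ` e) ` ((\<lambda>e. Inl ` e) ` {{u, v} | u v. u < k - s \<and> v < k - s \<and> u \<noteq> v})
   \<union> {{Inl u, Inr v} | u v. u < s \<and> v \<in> VR k s n}"
  by (simp add: extremal_graph_def graph_join_def disj_union_def verts_def edges_def complete_graph_def edgeless_graph_def)


lemma mem_K2: "({a, b} \<in> {{u, v} | u v. u < r \<and> v < r \<and> u \<noteq> v}) \<longleftrightarrow> a < r \<and> b < r \<and> a \<noteq> b"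
proof
  assume "{a, b} \<in> {{u, v} | u v. u < r \<and> v < r \<and> u \<noteq> v}"
  then obtain u v where "{a,b} = {u,v}" "u < r" "v < r" "u \<noteq> v" by blast
  then show "a < r \<and> b < r \<and> a \<noteq> b" by (auto simp: doubleton_eq_iff)
qed blast

lemma img_pair: "f ` {a, b} = {f a, f b}" by simp

lemma inj_img_Inl: "inj (image Inl)" by (simp add: inj_def inj_image_eq_iff)
lemma inj_img_Inr: "inj (image Inr)" by (simp add: inj_def inj_image_eq_iff)

lemma mem_imgL: "({Inl a, Inl b} \<in> (\<lambda>e. Inl ` e) ` A) \<longleftrightarrow> {a, b} \<in> A"
  using inj_image_mem_iff[OF inj_img_Inl, of "{a,b}" A] by simp
lemma mem_imgR: "({Inr a, Inr b} \<in> (\<lambda>e. Inr ` e) ` A) \<longleftrightarrow> {a, b} \<in> A"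
  using inj_image_mem_iff[OF inj_img_Inr, of "{a,b}" A] by simp
lemma nmem_imgL: "{Inr a, y} \<notin> (\<lambda>e. Inl ` e) ` A" by auto
lemma nmem_imgL': "{y, Inr a} \<notin> (\<lambda>e. Inl ` e) ` A" by auto
lemma nmem_imgR: "{Inl a, y} \<notin> (\<lambda>e. Inr ` e) ` A" by auto
lemma nmem_imgR': "{y, Inl a} \<notin> (\<lambda>e. Inr ` e) ` A" by auto
lemma mem_cross: "({x, y} \<in> {{Inl u, Inr v} | u v. u < s \<and> v \<in> B}) \<longleftrightarrow>
   (\<exists>u v. u < s \<and> v \<in> B \<and> ((x = Inl u \<and> y = Inr v) \<or> (x = Inr v \<and> y = Inl u)))"
  by (auto simp: doubleton_eq_iff)


lemma adj_LL: "adj (extremal_graph n k s) (Inl i) (Inl j) \<longleftrightarrow> i < s \<and> j < s \<and> i \<noteq> j"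
  unfolding adj_def edges_ext Un_iff mem_imgL mem_K2 mem_cross by (simp add: nmem_imgR doubleton_eq_iff)

lemma adj_LR: "adj (extremal_graph n k s) (Inl i) (Inr y) \<longleftrightarrow> i < s \<and> y \<in> VR k s n"
  unfolding adj_def edges_ext Un_iff mem_cross by (auto simp: nmem_imgR nmem_imgL' doubleton_eq_iff)

lemma adj_RL: "adj (extremal_graph n k s) (Inr y) (Inl i) \<longleftrightarrow> i < s \<and> y \<in> VR k s n"
  unfolding adj_def edges_ext Un_iff mem_cross by (auto simp: nmem_imgR' nmem_imgL doubleton_eq_iff)

lemma adj_RR: "adj (extremal_graph n k s) (Inr x) (Inr y) \<longleftrightarrow>
   (\<exists>i j. x = Inl i \<and> y = Inl j \<and> i < k - s \<and> j < k - s \<and> i \<noteq> j)"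
proof -
  have "adj (extremal_graph n k s) (Inr x) (Inr y) \<longleftrightarrow>
     {x, y} \<in> (\<lambda>e. Inl ` e) ` {{u, v} | u v. u < k - s \<and> v < k - s \<and> u \<noteq> v}"
    unfolding adj_def edges_ext Un_iff mem_cross mem_imgR by (simp add: nmem_imgL doubleton_eq_iff)
  also have "\<dots> \<longleftrightarrow> (\<exists>i j. x = Inl i \<and> y = Inl j \<and> i < k - s \<and> j < k - s \<and> i \<noteq> j)"
  proof (cases x; cases y)
    fix a b assume xy: "x = Inl a" "y = Inl b"
    show ?thesis unfolding xy mem_imgL mem_K2 by simp
  qed (auto simp: nmem_imgL nmem_imgL')
  finally show ?thesis .
qed


lemma iso_transfer:
  assumes f: "bij_betw f (verts G) (verts H)"
    and a: "\<forall>u\<in>verts G. \<forall>v\<in>verts G. adj G u v \<longleftrightarrow> adj H (f u) (f v)"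
  shows "card (univG G) = card (univG H) \<and> DG G = DG H"
proof -
  have inj: "inj_on f (verts G)" and im: "f ` verts G = verts H" using f by (auto simp: bij_betw_def)
  have subU: "univG G \<subseteq> verts G" by (auto simp: univG_def)
  have img: "f ` univG G = univG H"
  proof
    show "f ` univG G \<subseteq> univG H"
    proof
      fix y assume "y \<in> f ` univG G"
      then obtain u where u: "u \<in> univG G" "y = f u" by blast
      have uV: "u \<in> verts G" using u by (simp add: univG_def)
      have "adj H y z" if z: "z \<in> verts H" "z \<noteq> y" for z
      proof -
        obtain v where v: "v \<in> verts G" "z = f v" using z im by blast
        then have "v \<noteq> u" using z u by auto
        then have "adj G u v" using u v by (simp add: univG_def)
        then show ?thesis using a uV v u by simp
      qed
      then show "y \<in> univG H" using uV u im by (auto simp: univG_def)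
    qed
    show "univG H \<subseteq> f ` univG G"
    proof
      fix y assume y: "y \<in> univG H"
      then obtain u where u: "u \<in> verts G" "y = f u" using im by (auto simp: univG_def)
      have "adj G u v" if v: "v \<in> verts G" "v \<noteq> u" for v
      proof -
        have "f v \<noteq> f u" using inj v u by (auto simp: inj_on_def)
        moreover have "f v \<in> verts H" using v im by blast
        ultimately have "adj H y (f v)" using y u by (simp add: univG_def)
        then show ?thesis using a u v by simp
      qed
      then have "u \<in> univG G" using u by (simp add: univG_def)
      then show "y \<in> f ` univG G" using u by blast
    qed
  qed
  have c1: "card (univG G) = card (univG H)"
    using img card_image[OF inj_on_subset[OF inj subU]] by simp
  let ?WG = "verts G - univG G" and ?WH = "verts H - univG H"
  have imW: "f ` ?WG = ?WH"
    using inj_on_image_set_diff[OF inj _ subU] im img by simp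
  have injW: "inj_on f ?WG" using inj_on_subset[OF inj] by blast
  have nb: "nbrG H ?WH (f u) = f ` nbrG G ?WG u" if u: "u \<in> ?WG" for u
  proof
    show "nbrG H ?WH (f u) \<subseteq> f ` nbrG G ?WG u"
    proof
      fix y assume y: "y \<in> nbrG H ?WH (f u)"
      then obtain v where v: "v \<in> ?WG" "y = f v" using imW by (auto simp: nbrG_def)
      then have "adj G u v" using a u y by (auto simp: nbrG_def)
      then show "y \<in> f ` nbrG G ?WG u" using v by (auto simp: nbrG_def)
    qed
    show "f ` nbrG G ?WG u \<subseteq> nbrG H ?WH (f u)"
      using a u imW by (auto simp: nbrG_def)
  qed
  have "DG H = (\<Sum>y\<in>f ` ?WG. card (nbrG H ?WH y))" unfolding DG_def imW ..
  also have "\<dots> = (\<Sum>u\<in>?WG. card (nbrG H ?WH (f u)))" by (rule sum.reindex[OF injW, unfolded comp_def])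
  also have "\<dots> = (\<Sum>u\<in>?WG. card (nbrG G ?WG u))"
  proof (rule sum.cong[OF refl])
    fix u assume u: "u \<in> ?WG"
    have "inj_on f (nbrG G ?WG u)" by (rule inj_on_subset[OF injW]) (auto simp: nbrG_def)
    then show "card (nbrG H ?WH (f u)) = card (nbrG G ?WG u)" using nb[OF u] card_image by simp
  qed
  also have "\<dots> = DG G" unfolding DG_def ..
  finally show ?thesis using c1 by simp
qed


lemma univ_ext:
  assumes sk: "s < k" and kn: "k < n"
  shows "univG (extremal_graph n k s) = Inl ` {..<s}"
proof
  let ?X = "extremal_graph n k s"
  show "univG ?X \<subseteq> Inl ` {..<s}"
  proof
    fix a assume a: "a \<in> univG ?X"
    then have aV: "a \<in> verts ?X" and aa: "\<forall>v\<in>verts ?X. v \<noteq> a \<longrightarrow> adj ?X a v"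
      by (auto simp: univG_def)
    show "a \<in> Inl ` {..<s}"
    proof (cases a)
      case (Inl i) then show ?thesis using aV by (auto simp: verts_ext)
    next
      case (Inr y)
      show ?thesis
      proof (cases y)
        case (Inl i)
        have "Inr (Inr 0) \<in> verts ?X" using kn by (simp add: verts_ext)
        then have "adj ?X a (Inr (Inr 0))" using aa \<open>a = Inr y\<close> Inl by auto
        then show ?thesis using \<open>a = Inr y\<close> Inl by (simp add: adj_RR)
      next
        case (Inr i)
        have "Inr (Inl 0) \<in> verts ?X" using sk by (simp add: verts_ext)
        then have "adj ?X a (Inr (Inl 0))" using aa \<open>a = Inr y\<close> Inr by auto
        then show ?thesis using \<open>a = Inr y\<close> Inr by (simp add: adj_RR)
      qed
    qed
  qed
  show "Inl ` {..<s} \<subseteq> univG ?X"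
  proof
    fix a :: "nat + nat + nat" assume "a \<in> Inl ` {..<s}"
    then obtain i where i: "a = Inl i" "i < s" by blast
    have "adj ?X a v" if v: "v \<in> verts ?X" "v \<noteq> a" for v
    proof (cases v)
      case (Inl j) then show ?thesis using v i by (auto simp: verts_ext adj_LL)
    next
      case (Inr y) then show ?thesis using v i by (auto simp: verts_ext adj_LR)
    qed
    then show "a \<in> univG ?X" using i by (auto simp: univG_def verts_ext)
  qed
qed

lemma D_ext:
  assumes sk: "s < k" and kn: "k < n"
  shows "DG (extremal_graph n k s) = (k - s) * (k - s - 1)"
proof -
  let ?X = "extremal_graph n k s"
  have WX: "verts ?X - univG ?X = Inr ` VR k s n"
    unfolding univ_ext[OF sk kn] verts_ext by auto
  have nb1: "nbrG ?X (Inr ` VR k s n) (Inr (Inl i)) = Inr ` Inl ` ({..<k-s} - {i})" if "i < k - s" for i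
    using that by (auto simp: nbrG_def adj_RR)
  have nb2: "nbrG ?X (Inr ` VR k s n) (Inr (Inr i)) = {}" for i
    by (auto simp: nbrG_def adj_RR)
  have "DG ?X = (\<Sum>y\<in>Inr ` VR k s n. card (nbrG ?X (Inr ` VR k s n) y))"
    unfolding DG_def WX ..
  also have "\<dots> = (\<Sum>z\<in>VR k s n. card (nbrG ?X (Inr ` VR k s n) (Inr z)))"
    by (subst sum.reindex) auto
  also have "\<dots> = (\<Sum>z\<in>Inl ` {..<k-s}. card (nbrG ?X (Inr ` VR k s n) (Inr z)))
                   + (\<Sum>z\<in>Inr ` {..<n-k}. card (nbrG ?X (Inr ` VR k s n) (Inr z)))"
    by (rule sum.union_disjoint) auto
  also have "(\<Sum>z\<in>Inr ` {..<n-k}. card (nbrG ?X (Inr ` VR k s n) (Inr z))) = 0"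
    using nb2 by (simp add: sum.reindex)
  also have "(\<Sum>z\<in>Inl ` {..<k-s}. card (nbrG ?X (Inr ` VR k s n) (Inr z)))
      = (\<Sum>i\<in>{..<k-s}. card (nbrG ?X (Inr ` VR k s n) (Inr (Inl i))))"
    by (subst sum.reindex) auto
  also have "\<dots> = (\<Sum>i\<in>{..<k-s}. k - s - 1)"
  proof (rule sum.cong[OF refl])
    fix i assume i: "i \<in> {..<k-s}"
    have "card (Inr ` Inl ` ({..<k-s} - {i}) :: (nat + nat + nat) set) = card ({..<k-s} - {i})"
      by (simp add: card_image inj_on_def)
    then show "card (nbrG ?X (Inr ` VR k s n) (Inr (Inl i))) = k - s - 1"
      using nb1 i by (simp add: card_image inj_on_def)
  qed
  finally show ?thesis by simp
qed


lemma bij_piece: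
  assumes h: "bij_betw h A B" and fg: "\<forall>x\<in>A. f x = g (h x)" and g: "inj g"
  shows "bij_betw f A (g ` B)"
proof -
  have "bij_betw (g \<circ> h) A (g ` B)"
    by (rule bij_betw_trans[OF h]) (use g in \<open>auto simp: bij_betw_def inj_on_def\<close>)
  then show ?thesis by (rule bij_betw_cong[THEN iffD1, rotated]) (use fg in auto)
qed

lemma bij_lt: "finite A \<Longrightarrow> \<exists>h. bij_betw h A {..<card A}"
  using ex_bij_betw_finite_nat[of A] by (simp add: atLeast0LessThan)

context cgraph
begin

lemma build_iso:
  assumes tk: "card Uv < k" and kn: "k < card V"
    and S: "S \<subseteq> W" "card S = k - card Uv" "\<forall>u\<in>S. \<forall>v\<in>S. u \<noteq> v \<longrightarrow> adj G u v"
      "\<forall>u\<in>W. \<forall>v\<in>W. adj G u v \<longrightarrow> u \<in> S \<and> v \<in> S"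
  shows "graph_iso G (extremal_graph (card V) k (card Uv))"
proof -
  let ?t = "card Uv" and ?n = "card V"
  let ?X = "extremal_graph ?n k ?t"
  have finS: "finite S" using S(1) fin_W finite_subset by blast
  have cWS: "card (W - S) = ?n - k"
    using card_Diff_subset[OF finS S(1)] card_W S(2) tk kn by simp
  obtain h1 where h1: "bij_betw h1 Uv {..<?t}" using bij_lt[OF fin_univ] by blast
  obtain h2 where h2: "bij_betw h2 S {..<k - ?t}" using bij_lt[OF finS] S(2) by auto
  obtain h3 where h3: "bij_betw h3 (W - S) {..<?n - k}" using bij_lt[of "W - S"] fin_W cWS by auto
  define f where "f v = (if v \<in> Uv then Inl (h1 v) else if v \<in> S then Inr (Inl (h2 v)) else Inr (Inr (h3 v)))" for v
  have b1: "bij_betw f Uv (Inl ` {..<?t})"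
    by (rule bij_piece[OF h1]) (auto simp: f_def)
  have b2: "bij_betw f S ((Inr \<circ> Inl) ` {..<k - ?t})"
    by (rule bij_piece[OF h2]) (use S(1) in \<open>auto simp: f_def inj_def\<close>)
  have b3: "bij_betw f (W - S) ((Inr \<circ> Inr) ` {..<?n - k})"
    by (rule bij_piece[OF h3]) (auto simp: f_def inj_def)
  have b23: "bij_betw f (S \<union> (W - S)) ((Inr \<circ> Inl) ` {..<k - ?t} \<union> (Inr \<circ> Inr) ` {..<?n - k})"
    by (rule bij_betw_combine[OF b2 b3]) auto
  have b: "bij_betw f (Uv \<union> (S \<union> (W - S))) (Inl ` {..<?t} \<union> ((Inr \<circ> Inl) ` {..<k - ?t} \<union> (Inr \<circ> Inr) ` {..<?n - k}))"
    by (rule bij_betw_combine[OF b1 b23]) auto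
  have V_eq: "Uv \<union> (S \<union> (W - S)) = V" using S(1) univ_sub by auto
  have X_eq: "Inl ` {..<?t} \<union> ((Inr \<circ> Inl) ` {..<k - ?t} \<union> (Inr \<circ> Inr) ` {..<?n - k}) = verts ?X"
    by (simp add: verts_ext image_Un image_comp)
  have bij: "bij_betw f V (verts ?X)" using b unfolding V_eq X_eq .
  have h1r: "h1 v < ?t" if "v \<in> Uv" for v using h1 that by (auto simp: bij_betw_def)
  have h2r: "h2 v < k - ?t" if "v \<in> S" for v using h2 that by (auto simp: bij_betw_def)
  have h3r: "h3 v < ?n - k" if "v \<in> W - S" for v using h3 that by (auto simp: bij_betw_def)
  have h1i: "h1 u \<noteq> h1 v" if "u \<in> Uv" "v \<in> Uv" "u \<noteq> v" for u v
    using h1 that by (auto simp: bij_betw_def inj_on_def)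
  have h2i: "h2 u \<noteq> h2 v" if "u \<in> S" "v \<in> S" "u \<noteq> v" for u v
    using h2 that by (auto simp: bij_betw_def inj_on_def)
  have adjeq: "adj G u v \<longleftrightarrow> adj ?X (f u) (f v)" if u: "u \<in> V" and v: "v \<in> V" for u v
  proof (cases "u = v")
    case True
    then show ?thesis
      by (cases "u \<in> Uv"; cases "u \<in> S") (auto simp: f_def adj_LL adj_RR)
  next
    case False
    consider "u \<in> Uv" | "u \<in> S" | "u \<in> W - S" using u by blast
    then show ?thesis
    proof cases
      case 1
      consider "v \<in> Uv" | "v \<in> S" | "v \<in> W - S" using v by blast
      then show ?thesis
      proof cases
        case 1
        then show ?thesis using \<open>u \<in> Uv\<close> False univ_adj[of u v] v h1r h1i by (simp add: f_def adj_LL)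
      next
        case 2
        then have "v \<notin> Uv" using S(1) by auto
        then show ?thesis using \<open>u \<in> Uv\<close> \<open>v \<in> S\<close> False univ_adj[of u v] v h1r h2r by (simp add: f_def adj_LR)
      next
        case 3
        then show ?thesis using \<open>u \<in> Uv\<close> False univ_adj[of u v] v h1r h3r by (simp add: f_def adj_LR)
      qed
    next
      case 2
      then have uU: "u \<notin> Uv" using S(1) by auto
      consider "v \<in> Uv" | "v \<in> S" | "v \<in> W - S" using v by blast
      then show ?thesis
      proof cases
        case 1
        then show ?thesis using uU \<open>u \<in> S\<close> False univ_adj[of v u] u h1r h2r by (simp add: f_def adj_RL)
      next
        case 2
        then have "v \<notin> Uv" using S(1) by auto
        then show ?thesis using uU \<open>u \<in> S\<close> \<open>v \<in> S\<close> False S(3) h2r h2i by (simp add: f_def adj_RR)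
      next
        case 3
        have "\<not> adj G u v" using S(4) \<open>v \<in> W - S\<close> \<open>u \<in> S\<close> S(1) by blast
        then show ?thesis using uU \<open>u \<in> S\<close> \<open>v \<in> W - S\<close> by (simp add: f_def adj_RR)
      qed
    next
      case 3
      consider "v \<in> Uv" | "v \<in> S" | "v \<in> W - S" using v by blast
      then show ?thesis
      proof cases
        case 1
        then show ?thesis using \<open>u \<in> W - S\<close> False univ_adj[of v u] u h1r h3r by (simp add: f_def adj_RL)
      next
        case 2
        have "\<not> adj G u v" using S(4) \<open>u \<in> W - S\<close> \<open>v \<in> S\<close> S(1) by blast
        then show ?thesis using \<open>u \<in> W - S\<close> \<open>v \<in> S\<close> S(1) by (auto simp: f_def adj_RR)
      next
        case 3
        have "\<not> adj G u v" using S(4) \<open>u \<in> W - S\<close> \<open>v \<in> W - S\<close> by blast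
        then show ?thesis using \<open>u \<in> W - S\<close> \<open>v \<in> W - S\<close> by (simp add: f_def adj_RR)
      qed
    qed
  qed
  show ?thesis unfolding graph_iso_def using bij adjeq by blast
qed

end


definition fr :: "real \<Rightarrow> real \<Rightarrow> real \<Rightarrow> real" where
  "fr n k t = t * (t - 1) / 2 + 2 * t * (n - t) + 2 * (k - t) * (k - t - 1)"

context cgraph
begin

lemma has_nbr: assumes u: "u \<in> V" shows "nbr V u \<noteq> {}"
proof -
  obtain v where v: "v \<in> V" "v \<noteq> u" using other[OF u] by blast
  obtain xs where xs: "walk G xs" "hd xs = u" "last xs = v" using conn u v unfolding connected_graph_def by blast
  have ne: "xs \<noteq> []" using xs(1) by (simp add: walk_def)
  have "length xs \<noteq> 1"
  proof
    assume "length xs = 1"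
    then have "hd xs = last xs" by (cases xs) auto
    then show False using xs v by simp
  qed
  then have l: "Suc 0 < length xs" using ne by (cases xs) auto
  then have "adj G (xs ! 0) (xs ! Suc 0)" using xs(1) by (simp add: walk_def)
  moreover have "xs ! 0 = u" using xs(2) ne by (simp add: hd_conv_nth)
  moreover have "xs ! Suc 0 \<in> V" using xs(1) l by (auto simp: walk_def)
  ultimately show ?thesis by (auto simp: nbr_def)
qed

lemma R1:
  assumes kk: "chromatic_number G = k \<or> clique_number G = k" and k2: "2 \<le> k" and kn: "k < card V"
    and e: "Uv = {}"
  shows "2 * real (card V) + 2 * real k ^ 2 - 4 * real k \<le> real (sigma2 G)"
proof -
  let ?n = "card V"
  obtain S where S: "S \<subseteq> V" "k \<le> card S" "\<forall>u\<in>S. k - 1 \<le> card (nbr S u)"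
    using core[OF kk k2 kn] e by auto
  have finS: "finite S" using S(1) finV finite_subset by blast
  have a: "card S * (k - 1) \<le> (\<Sum>u\<in>S. card (nbr S u))"
  proof -
    have "card S * (k - 1) = (\<Sum>u\<in>S. k - 1)" by simp
    also have "\<dots> \<le> (\<Sum>u\<in>S. card (nbr S u))" by (rule sum_mono) (use S(3) in auto)
    finally show ?thesis .
  qed
  have b: "(\<Sum>u\<in>S. card (nbr S u)) \<le> (\<Sum>u\<in>S. card (nbr V u))"
    by (rule sum_mono, rule card_mono) (use finV finite_subset[OF nbr_sub] nbr_mono[OF S(1)] in auto)
  have c: "card (V - S) \<le> (\<Sum>u\<in>V - S. card (nbr V u))"
  proof -
    have "card (V - S) = (\<Sum>u\<in>V - S. 1)" by simp
    also have "\<dots> \<le> (\<Sum>u\<in>V - S. card (nbr V u))"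
    proof (rule sum_mono)
      fix u assume "u \<in> V - S"
      then have "nbr V u \<noteq> {}" using has_nbr by blast
      moreover have "finite (nbr V u)" using finV finite_subset[OF nbr_sub] by blast
      ultimately show "1 \<le> card (nbr V u)" by (simp add: Suc_le_eq card_gt_0_iff)
    qed
    finally show ?thesis .
  qed
  have sp: "(\<Sum>u\<in>V. card (nbr V u)) = (\<Sum>u\<in>V - S. card (nbr V u)) + (\<Sum>u\<in>S. card (nbr V u))"
    using sum.subset_diff[OF S(1) finV] by simp
  have cVS: "card (V - S) = ?n - card S" using card_Diff_subset[OF finS S(1)] .
  have cSn: "card S \<le> ?n" using card_mono[OF finV S(1)] .
  have main: "4 * (card S * (k - 1) + (?n - card S)) \<le> 2 * sigma2 G"
  proof -
    have "card S * (k - 1) + (?n - card S) \<le> (\<Sum>u\<in>V. card (nbr V u))"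
      using a b c sp cVS by linarith
    then show ?thesis by (rule order_trans[OF mult_le_mono2 sigma_lower0[OF e]])
  qed
  have r: "4 * (real (card S) * (real k - 1) + (real ?n - real (card S))) \<le> 2 * real (sigma2 G)"
  proof -
    have "real (4 * (card S * (k - 1) + (?n - card S))) \<le> real (2 * sigma2 G)"
      using main by (simp only: of_nat_le_iff)
    then show ?thesis using cSn k2 by (simp add: of_nat_diff)
  qed
  have "real k * (real k - 2) \<le> real (card S) * (real k - 2)"
    using S(2) k2 by (intro mult_right_mono) auto
  then show ?thesis using r by (simp add: power2_eq_square algebra_simps)
qed

lemma R2:
  assumes kk: "chromatic_number G = k \<or> clique_number G = k" and k2: "2 \<le> k" and kn: "k < card V"
    and ne: "Uv \<noteq> {}"
  shows "(k - card Uv) * (k - card Uv - 1) \<le> D"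
    and "real (sigma2 G) = fr (card V) k (card Uv) + 2 * (real D - real ((k - card Uv) * (k - card Uv - 1)))"
proof -
  let ?t = "card Uv" and ?n = "card V"
  obtain S where tk: "?t \<le> k - 1" and S: "S \<subseteq> W" "k - ?t \<le> card S" "\<forall>u\<in>S. k - ?t - 1 \<le> card (nbr S u)"
    using core[OF kk k2 kn] by auto
  have X: "(k - ?t - 1 + 1) * (k - ?t - 1) \<le> D"
  proof -
    have "k - ?t - 1 + 1 \<le> card S" using S(2) tk k2 by linarith
    then show ?thesis unfolding D_def by (rule degsum_lower[OF fin_W S(1)]) (use S(3) in auto)
  qed
  have eqk: "k - ?t - 1 + 1 = k - ?t" using tk k2 by simp
  show dl: "(k - ?t) * (k - ?t - 1) \<le> D" using X unfolding eqk .
  have t1: "1 \<le> ?t" using ne fin_univ by (simp add: Suc_le_eq card_gt_0_iff)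
  have tn: "?t \<le> ?n" using card_mono[OF finV univ_sub] .
  obtain a where na: "?n = ?t + a" using tn le_iff_add by blast
  obtain b where tb: "?t = Suc b" using t1 by (cases ?t) auto
  have sf: "2 * sigma2 G = Suc b * b + 4 * Suc b * a + 4 * D"
    using sigma_formula[OF ne] unfolding na tb by simp
  then have "real (2 * sigma2 G) = real (Suc b * b + 4 * Suc b * a + 4 * D)" by simp
  then have "2 * real (sigma2 G) = real ?t * (real ?t - 1) + 4 * real ?t * (real ?n - real ?t) + 4 * real D"
    unfolding na tb by (simp add: algebra_simps)
  then have "real (sigma2 G) = real ?t * (real ?t - 1) / 2 + 2 * real ?t * (real ?n - real ?t) + 2 * real D"
    by linarith
  moreover have "real ((k - ?t) * (k - ?t - 1)) = (real k - real ?t) * (real k - real ?t - 1)"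
    using tk k2 by (simp add: of_nat_diff)
  ultimately show "real (sigma2 G) = fr ?n k ?t + 2 * (real D - real ((k - ?t) * (k - ?t - 1)))"
    by (simp add: fr_def algebra_simps)
qed

end


lemma aux1: fixes x y z w :: real shows "x \<le> y \<Longrightarrow> z = w + 2 * (y - x) \<Longrightarrow> w \<le> z" by simp
lemma aux2: fixes x y z w b :: real shows "z = w + 2 * (y - x) \<Longrightarrow> z = b \<Longrightarrow> w = b \<Longrightarrow> y = x" by simp

context cgraph
begin

lemma iso_ext_facts:
  assumes iso: "graph_iso G (extremal_graph (card V) k s)" and sk: "s < k" and kn: "k < card V"
  shows "card Uv = s \<and> D = (k - s) * (k - s - 1)"
proof -
  obtain f where f: "bij_betw f V (verts (extremal_graph (card V) k s))"
    "\<forall>u\<in>V. \<forall>v\<in>V. adj G u v \<longleftrightarrow> adj (extremal_graph (card V) k s) (f u) (f v)"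
    using iso unfolding graph_iso_def by blast
  have tr: "card Uv = card (univG (extremal_graph (card V) k s)) \<and> D = DG (extremal_graph (card V) k s)"
    by (rule iso_transfer[OF f])
  have "card (univG (extremal_graph (card V) k s)) = s"
    unfolding univ_ext[OF sk kn] by (simp add: card_image)
  then show ?thesis using tr D_ext[OF sk kn] by simp
qed

lemma generic:
  assumes kk: "chromatic_number G = k \<or> clique_number G = k" and k2: "2 \<le> k" and kn: "k < card V"
    and ar: "\<And>t. 1 \<le> t \<Longrightarrow> t \<le> k - 1 \<Longrightarrow> B \<le> fr (card V) k t \<and> (fr (card V) k t = B \<longleftrightarrow> t \<in> A)"
    and As: "\<And>s. s \<in> A \<Longrightarrow> 1 \<le> s \<and> s \<le> k - 1"
  shows "B \<le> real (sigma2 G) \<and> (real (sigma2 G) = B \<longleftrightarrow> (\<exists>s\<in>A. graph_iso G (extremal_graph (card V) k s)))"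
proof -
  let ?n = "card V"
  have fr1: "fr ?n k 1 = 2 * real ?n + 2 * real k ^ 2 - 6 * real k + 2"
    by (simp add: fr_def power2_eq_square algebra_simps)
  have B1: "B \<le> fr ?n k 1" using ar[of 1] k2 by simp
  show ?thesis
  proof (cases "Uv = {}")
    case True
    have "2 * real ?n + 2 * real k ^ 2 - 4 * real k \<le> real (sigma2 G)" by (rule R1[OF kk k2 kn True])
    then have lt: "B < real (sigma2 G)" using B1 fr1 k2 by simp
    have "\<not> graph_iso G (extremal_graph ?n k s)" if s: "s \<in> A" for s
    proof
      assume "graph_iso G (extremal_graph ?n k s)"
      then have "card Uv = s" using iso_ext_facts As[OF s] k2 kn by force
      then show False using True As[OF s] by simp
    qed
    then show ?thesis using lt by auto
  next
    case False
    let ?t = "card Uv"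
    obtain S where tk: "?t \<le> k - 1" and S: "S \<subseteq> W" "k - ?t \<le> card S" "\<forall>u\<in>S. k - ?t - 1 \<le> card (nbr S u)"
      using core[OF kk k2 kn] by auto
    have t1: "1 \<le> ?t" using False fin_univ by (simp add: Suc_le_eq card_gt_0_iff)
    have Dl: "(k - ?t) * (k - ?t - 1) \<le> D" and sig: "real (sigma2 G) = fr ?n k ?t + 2 * (real D - real ((k - ?t) * (k - ?t - 1)))"
      using R2[OF kk k2 kn False] by auto
    have "real ((k - ?t) * (k - ?t - 1)) \<le> real D" using Dl by (rule of_nat_mono)
    then have ge: "fr ?n k ?t \<le> real (sigma2 G)" using sig by (rule aux1)
    have Bt: "B \<le> fr ?n k ?t" and Beq: "fr ?n k ?t = B \<longleftrightarrow> ?t \<in> A" using ar[OF t1 tk] by auto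
    have fwd: "\<exists>s\<in>A. graph_iso G (extremal_graph ?n k s)" if eq: "real (sigma2 G) = B"
    proof -
      have "fr ?n k ?t = B" using eq ge Bt by simp
      then have tA: "?t \<in> A" using Beq by simp
      have "real D = real ((k - ?t) * (k - ?t - 1))" using aux2[OF sig eq \<open>fr ?n k ?t = B\<close>] .
      then have Deq: "D = (k - ?t) * (k - ?t - 1)" by (simp only: of_nat_eq_iff)
      have e1: "k - ?t - 1 + 1 = k - ?t" using tk k2 by simp
      have "0 < card S" using S(2) tk k2 by linarith
      then have "S \<noteq> {}" by auto
      then have Wne: "W \<noteq> {}" using S(1) by blast
      have "\<exists>S'\<subseteq>W. card S' = k - ?t - 1 + 1 \<and> (\<forall>u\<in>S'. \<forall>v\<in>S'. u \<noteq> v \<longrightarrow> adj G u v)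
           \<and> (\<forall>u\<in>W. \<forall>v\<in>W. adj G u v \<longrightarrow> u \<in> S' \<and> v \<in> S')"
      proof (rule degsum_eq[OF fin_W Wne S(1)])
        show "k - ?t - 1 + 1 \<le> card S" using S(2) e1 by simp
        show "\<forall>u\<in>S. k - ?t - 1 \<le> card (nbr S u)" by (rule S(3))
        show "(\<Sum>u\<in>W. card (nbr W u)) = (k - ?t - 1 + 1) * (k - ?t - 1)"
          using Deq e1 by (simp add: D_def)
      qed
      then obtain S' where S': "S' \<subseteq> W" "card S' = k - ?t" "\<forall>u\<in>S'. \<forall>v\<in>S'. u \<noteq> v \<longrightarrow> adj G u v"
           "\<forall>u\<in>W. \<forall>v\<in>W. adj G u v \<longrightarrow> u \<in> S' \<and> v \<in> S'" unfolding e1 by blast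
      have "?t < k" using tk k2 by simp
      then have "graph_iso G (extremal_graph ?n k ?t)" using build_iso[OF _ kn S'] by simp
      then show ?thesis using tA by blast
    qed
    have bwd: "real (sigma2 G) = B" if ex: "\<exists>s\<in>A. graph_iso G (extremal_graph ?n k s)"
    proof -
      obtain s where s: "s \<in> A" "graph_iso G (extremal_graph ?n k s)" using ex by blast
      have sk: "s < k" using As[OF s(1)] k2 by linarith
      have "card Uv = s \<and> D = (k - s) * (k - s - 1)" by (rule iso_ext_facts[OF s(2) sk kn])
      then have "real (sigma2 G) = fr ?n k s" using sig by simp
      moreover have "fr ?n k s = B" using ar[of s] As[OF s(1)] s(1) by simp
      ultimately show ?thesis by simp
    qed
    show ?thesis using fwd bwd ge Bt by auto
  qed
qed

end


lemma fr_expand: "fr n k t = t^2/2 + (2*n - 4*k + 3/2) * t + 2*k^2 - 2*k"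
  by (simp add: fr_def power2_eq_square field_simps)

lemma arith1:
  fixes n k t :: nat
  assumes k: "k \<le> (n + 1) div 2" and t: "1 \<le> t"
  shows "2 * real n + 2 * real k ^ 2 - 6 * real k + 2 \<le> fr n k t \<and>
         (fr n k t = 2 * real n + 2 * real k ^ 2 - 6 * real k + 2 \<longleftrightarrow> t \<in> {1})"
proof -
  have k2: "2 * k \<le> n + 1" using k by linarith
  then have k2r: "2 * real k \<le> real n + 1" by linarith
  have id: "fr n k t - (2 * real n + 2 * real k ^ 2 - 6 * real k + 2) = (real t - 1) * (real t + 4 * real n - 8 * real k + 4) / 2"
    by (simp add: fr_expand power2_eq_square field_simps)
  have p1: "0 \<le> real t - 1" using t by simp
  have p2: "0 < real t + 4 * real n - 8 * real k + 4" using k2r t by simp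
  have "0 \<le> (real t - 1) * (real t + 4 * real n - 8 * real k + 4)" using p1 p2 by simp
  moreover have "(real t - 1) * (real t + 4 * real n - 8 * real k + 4) = 0 \<longleftrightarrow> t = 1" using p2 by simp
  ultimately show ?thesis using id by auto
qed

lemma arith3:
  fixes n k t :: nat
  assumes k: "\<lceil>real (2 * n + 1) / 3\<rceil> \<le> int k" and t: "t \<le> k - 1" and k2: "2 \<le> k"
  shows "2 * (real k - 1) * real n - 3 * real k ^ 2 / 2 + 5 * real k / 2 - 1 \<le> fr n k t \<and>
         (fr n k t = 2 * (real k - 1) * real n - 3 * real k ^ 2 / 2 + 5 * real k / 2 - 1 \<longleftrightarrow> t \<in> {k - 1})"
proof -
  have "real (2 * n + 1) / 3 \<le> real k" using k by (simp add: ceiling_le_iff)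
  then have k3: "2 * real n + 1 \<le> 3 * real k" by simp
  define a where "a = real k - 1 - real t"
  have a0: "0 \<le> a" using t k2 by (simp add: a_def of_nat_diff)
  have id: "fr n k t - (2 * (real k - 1) * real n - 3 * real k ^ 2 / 2 + 5 * real k / 2 - 1) = a * (6 * real k - 4 * real n - 1 + a) / 2"
    by (simp add: a_def fr_expand power2_eq_square field_simps)
  have p2: "0 < 6 * real k - 4 * real n - 1 + a" using k3 a0 by simp
  have "0 \<le> a * (6 * real k - 4 * real n - 1 + a)" using a0 p2 by simp
  moreover have "a * (6 * real k - 4 * real n - 1 + a) = 0 \<longleftrightarrow> t = k - 1"
  proof -
    have "a = 0 \<longleftrightarrow> t = k - 1" using k2 by (simp add: a_def of_nat_diff) linarith
    then show ?thesis using p2 by simp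
  qed
  ultimately show ?thesis using id by auto
qed

lemma arith2:
  fixes n k t :: nat
  shows "(8 * real k - 3) * real n - 2 * real n ^ 2 - 6 * real k ^ 2 + 4 * real k - 1 \<le> fr n k t \<and>
         (fr n k t = (8 * real k - 3) * real n - 2 * real n ^ 2 - 6 * real k ^ 2 + 4 * real k - 1 \<longleftrightarrow>
            t \<in> {s. int s = 4 * int k - 2 * int n - 2 \<or> int s = 4 * int k - 2 * int n - 1})"
proof -
  define d :: int where "d = int t - (4 * int k - 2 * int n - 2)"
  have id: "fr n k t - ((8 * real k - 3) * real n - 2 * real n ^ 2 - 6 * real k ^ 2 + 4 * real k - 1) = real_of_int (d * (d - 1)) / 2"
    by (simp add: d_def fr_expand power2_eq_square field_simps)
  have nn: "0 \<le> d * (d - 1)"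
  proof (cases "1 \<le> d")
    case True then show ?thesis by simp
  next
    case False then have "d \<le> 0" by simp
    then show ?thesis by (simp add: mult_nonpos_nonpos)
  qed
  have z: "d * (d - 1) = 0 \<longleftrightarrow> d = 0 \<or> d = 1" by simp
  have "0 \<le> real_of_int (d * (d - 1))" using nn by (simp only: of_int_0_le_iff)
  moreover have "real_of_int (d * (d - 1)) = 0 \<longleftrightarrow> (int t = 4 * int k - 2 * int n - 2 \<or> int t = 4 * int k - 2 * int n - 1)"
    using z unfolding d_def by (simp only: of_int_eq_0_iff) linarith
  ultimately show ?thesis using id by auto
qed

theorem theorem4p5:
  fixes G :: "'a graph" and n k :: nat
  assumes "simple_graph G" and "connected_graph G" and "card (verts G) = n"
    and "2 \<le> k" and "k \<le> n - 1"
    and "chromatic_number G = k \<or> clique_number G = k"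
  shows
    "(k \<le> (n + 1) div 2 \<longrightarrow>
        real (sigma2 G) \<ge> 2 * real n + 2 * real k ^ 2 - 6 * real k + 2 \<and>
        (real (sigma2 G) = 2 * real n + 2 * real k ^ 2 - 6 * real k + 2 \<longleftrightarrow>
           graph_iso G (extremal_graph n k 1)))
     \<and> ((n + 1) div 2 < k \<and> int k < \<lceil>real (2 * n + 1) / 3\<rceil> \<longrightarrow>
        real (sigma2 G) \<ge> (8 * real k - 3) * real n - 2 * real n ^ 2 - 6 * real k ^ 2 + 4 * real k - 1 \<and>
        (real (sigma2 G) = (8 * real k - 3) * real n - 2 * real n ^ 2 - 6 * real k ^ 2 + 4 * real k - 1 \<longleftrightarrow>
           (\<exists>s::nat. (int s = 4 * int k - 2 * int n - 2 \<or> int s = 4 * int k - 2 * int n - 1) \<and>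
              graph_iso G (extremal_graph n k s))))
     \<and> (\<lceil>real (2 * n + 1) / 3\<rceil> \<le> int k \<longrightarrow>
        real (sigma2 G) \<ge> 2 * (real k - 1) * real n - 3 * real k ^ 2 / 2 + 5 * real k / 2 - 1 \<and>
        (real (sigma2 G) = 2 * (real k - 1) * real n - 3 * real k ^ 2 / 2 + 5 * real k / 2 - 1 \<longleftrightarrow>
           graph_iso G (extremal_graph n k (k - 1))))"
proof -
  note n = assms(3)
  have k2: "2 \<le> k" by (rule assms(4))
  have kn: "k < card (verts G)" using assms(3-5) by linarith
  have kk: "chromatic_number G = k \<or> clique_number G = k" by (rule assms(6))
  interpret cgraph G
  proof unfold_locales
    show "simple_graph G" by (rule assms(1))
    show "connected_graph G" by (rule assms(2))
    show "2 \<le> card (verts G)" using kn k2 by linarith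
  qed
  have c1: "2 * real n + 2 * real k ^ 2 - 6 * real k + 2 \<le> real (sigma2 G) \<and>
        (real (sigma2 G) = 2 * real n + 2 * real k ^ 2 - 6 * real k + 2 \<longleftrightarrow>
           graph_iso G (extremal_graph n k 1))" if h: "k \<le> (n + 1) div 2"
  proof -
    have "2 * real n + 2 * real k ^ 2 - 6 * real k + 2 \<le> real (sigma2 G) \<and>
        (real (sigma2 G) = 2 * real n + 2 * real k ^ 2 - 6 * real k + 2 \<longleftrightarrow>
           (\<exists>s\<in>{1}. graph_iso G (extremal_graph (card (verts G)) k s)))"
    proof (rule generic[OF kk k2 kn])
      fix t assume t: "1 \<le> t" "t \<le> k - 1"
      show "2 * real n + 2 * real k ^ 2 - 6 * real k + 2 \<le> fr (card (verts G)) k t \<and>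
         (fr (card (verts G)) k t = 2 * real n + 2 * real k ^ 2 - 6 * real k + 2 \<longleftrightarrow> t \<in> {1})"
        unfolding n by (rule arith1[OF h t(1)])
    next
      fix s assume "s \<in> {1::nat}" then show "1 \<le> s \<and> s \<le> k - 1" using k2 by simp
    qed
    then show ?thesis unfolding n by simp
  qed
  have c2: "(8 * real k - 3) * real n - 2 * real n ^ 2 - 6 * real k ^ 2 + 4 * real k - 1 \<le> real (sigma2 G) \<and>
        (real (sigma2 G) = (8 * real k - 3) * real n - 2 * real n ^ 2 - 6 * real k ^ 2 + 4 * real k - 1 \<longleftrightarrow>
           (\<exists>s::nat. (int s = 4 * int k - 2 * int n - 2 \<or> int s = 4 * int k - 2 * int n - 1) \<and>
              graph_iso G (extremal_graph n k s)))"
    if h: "(n + 1) div 2 < k \<and> int k < \<lceil>real (2 * n + 1) / 3\<rceil>"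
  proof -
    have "real k < real (2 * n + 1) / 3" using h by (simp add: less_ceiling_iff)
    then have "real (3 * k) < real (2 * n + 1)" by simp
    then have "3 * k < 2 * n + 1" by (simp only: of_nat_less_iff)
    then have h3: "3 * k \<le> 2 * n" by simp
    have h2: "n + 2 \<le> 2 * k" using h by linarith
    have As: "1 \<le> s \<and> s \<le> k - 1" if "s \<in> {s. int s = 4 * int k - 2 * int n - 2 \<or> int s = 4 * int k - 2 * int n - 1}" for s
    proof -
      have "int s = 4 * int k - 2 * int n - 2 \<or> int s = 4 * int k - 2 * int n - 1" using that by simp
      then have "1 \<le> int s \<and> int s \<le> int k - 1" using h2 h3 by linarith
      then show ?thesis by linarith
    qed
    have "(8 * real k - 3) * real n - 2 * real n ^ 2 - 6 * real k ^ 2 + 4 * real k - 1 \<le> real (sigma2 G) \<and>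
        (real (sigma2 G) = (8 * real k - 3) * real n - 2 * real n ^ 2 - 6 * real k ^ 2 + 4 * real k - 1 \<longleftrightarrow>
           (\<exists>s\<in>{s. int s = 4 * int k - 2 * int n - 2 \<or> int s = 4 * int k - 2 * int n - 1}. graph_iso G (extremal_graph (card (verts G)) k s)))"
    proof (rule generic[OF kk k2 kn])
      fix t assume t: "1 \<le> t" "t \<le> k - 1"
      show "(8 * real k - 3) * real n - 2 * real n ^ 2 - 6 * real k ^ 2 + 4 * real k - 1 \<le> fr (card (verts G)) k t \<and>
         (fr (card (verts G)) k t = (8 * real k - 3) * real n - 2 * real n ^ 2 - 6 * real k ^ 2 + 4 * real k - 1 \<longleftrightarrow>
            t \<in> {s. int s = 4 * int k - 2 * int n - 2 \<or> int s = 4 * int k - 2 * int n - 1})"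
        unfolding n by (rule arith2)
    next
      fix s assume "s \<in> {s. int s = 4 * int k - 2 * int n - 2 \<or> int s = 4 * int k - 2 * int n - 1}"
      then show "1 \<le> s \<and> s \<le> k - 1" by (rule As)
    qed
    then show ?thesis unfolding n Bex_def mem_Collect_eq .
  qed
  have c3: "2 * (real k - 1) * real n - 3 * real k ^ 2 / 2 + 5 * real k / 2 - 1 \<le> real (sigma2 G) \<and>
        (real (sigma2 G) = 2 * (real k - 1) * real n - 3 * real k ^ 2 / 2 + 5 * real k / 2 - 1 \<longleftrightarrow>
           graph_iso G (extremal_graph n k (k - 1)))" if h: "\<lceil>real (2 * n + 1) / 3\<rceil> \<le> int k"
  proof -
    have "2 * (real k - 1) * real n - 3 * real k ^ 2 / 2 + 5 * real k / 2 - 1 \<le> real (sigma2 G) \<and>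
        (real (sigma2 G) = 2 * (real k - 1) * real n - 3 * real k ^ 2 / 2 + 5 * real k / 2 - 1 \<longleftrightarrow>
           (\<exists>s\<in>{k - 1}. graph_iso G (extremal_graph (card (verts G)) k s)))"
    proof (rule generic[OF kk k2 kn])
      fix t assume t: "1 \<le> t" "t \<le> k - 1"
      show "2 * (real k - 1) * real n - 3 * real k ^ 2 / 2 + 5 * real k / 2 - 1 \<le> fr (card (verts G)) k t \<and>
         (fr (card (verts G)) k t = 2 * (real k - 1) * real n - 3 * real k ^ 2 / 2 + 5 * real k / 2 - 1 \<longleftrightarrow> t \<in> {k - 1})"
        unfolding n by (rule arith3[OF h t(2) k2])
    next
      fix s assume "s \<in> {k - 1}" then show "1 \<le> s \<and> s \<le> k - 1" using k2 by simp
    qed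
    then show ?thesis unfolding n by simp
  qed
  show ?thesis using c1 c2 c3 by blast
qed

end
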